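(* Let $S=(G,P,\Lambda,I)$ be a completely simple semigroup in Rees form. (a) Suppose the columns of $P$ with indices $\lambda,\mu\in\Lambda$ are equal, i.e. $p_{k\lambda}=p_{k\mu}$ for all $k\in I$. Put $s_1=(\lambda,1,1)$, $s_2=(\mu,1,1)$. Then for every $\mathcal{L}_S$-term $t(x)$ in one variable $x$: if the word $[t](x)$ does not begin with the variable $x$, then $t(s_1)=t(s_2)$; if $[t](x)$ begins with $x$, then there are $g\in G$, $k\in I$ with $t(s_1)=(\lambda,g,k)$ and $t(s_2)=(\mu,g,k)$ (so the two values differ at most in the first index). (b) Symmetrically, suppose the rows of $P$ with indices $i,j\in I$ are equal, i.e. $p_{i\nu}=p_{j\nu}$ for all $\nu\in\Lambda$. Put $s_1=(1,1,i)$, $s_2=(1,1,j)$. Then for every $\mathcal{L}_S$-term $t(x)$: if $[t](x)$ does not end with $x$, then $t(s_1)=t(s_2)$; if $[t](x)$ ends with $x$, then there are $g\in G$, $\nu\in\Lambda$ with $t(s_1)=(\nu,g,i)$ and $t(s_2)=(\nu,g,j)$.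
   Context: Rees representation: a completely simple (c.s.) semigroup $S=(G,P,\Lambda,I)$ is given by a group $G$, index sets $\Lambda$ and $I$ (each containing a distinguished element $1$), and a matrix $P=(p_{i\lambda})_{i\in I,\lambda\in\Lambda}$ with entries in $G$ (rows indexed by $I$, columns by $\Lambda$), normalised so that $p_{1\lambda}=p_{i1}=1_G$ for all $i\in I,\lambda\in\Lambda$. Its elements are triples $(\lambda,g,i)$ with $\lambda\in\Lambda$, $g\in G$, $i\in I$ ($\lambda$ is the first index, $i$ the second index), with multiplication $(\lambda,g,i)(\mu,h,j)=(\lambda,g p_{i\mu} h,j)$ and inversion $(\lambda,g,i)^{-1}=(\lambda,p_{i\lambda}^{-1}g^{-1}p_{i\lambda}^{-1},i)$. The language $\mathcal{L}_S$ consists of $\cdot$, ${}^{-1}$ and a constant for every element of $S$. An $\mathcal{L}_S$-term in variables $X$ is built from variables and constants by products and by applying ${}^{-1}$. For a term $t$, $[t]$ denotes the word (sequence of variables and constants) obtained from $t$ by deleting all occurrences of the inversion (e.g. if $t=((xsy^{-1})^{-1}zx^{-1})^{-1}$ then $[t]=xsyzx$); "begins/ends with $x$" refers to the first/last symbol of this word. *)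

theory Defs
  imports "HOL-Algebra.Group"
begin

text \<open>The index sets Lambda and I are the types 'l and 'i, with distinguished
  elements l1 and i1. The sandwich matrix P has rows indexed by I and columns
  by Lambda: P i lam = p_{i lam}.\<close>

definition rees_carrier :: "('g, 'm) monoid_scheme \<Rightarrow> ('l \<times> 'g \<times> 'i) set" where
  "rees_carrier G = {(lam, g, i). g \<in> carrier G}"

definition rees_normalised ::
  "('g, 'm) monoid_scheme \<Rightarrow> ('i \<Rightarrow> 'l \<Rightarrow> 'g) \<Rightarrow> 'l \<Rightarrow> 'i \<Rightarrow> bool" where
  "rees_normalised G P l1 i1 \<longleftrightarrow>
     group G \<and> (\<forall>i lam. P i lam \<in> carrier G)
     \<and> (\<forall>lam. P i1 lam = \<one>\<^bsub>G\<^esub>) \<and> (\<forall>i. P i l1 = \<one>\<^bsub>G\<^esub>)"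

fun rees_mult ::
  "('g, 'm) monoid_scheme \<Rightarrow> ('i \<Rightarrow> 'l \<Rightarrow> 'g) \<Rightarrow> 'l \<times> 'g \<times> 'i \<Rightarrow> 'l \<times> 'g \<times> 'i \<Rightarrow> 'l \<times> 'g \<times> 'i" where
  "rees_mult G P (lam, g, i) (mu, h, j) = (lam, g \<otimes>\<^bsub>G\<^esub> P i mu \<otimes>\<^bsub>G\<^esub> h, j)"

fun rees_inv ::
  "('g, 'm) monoid_scheme \<Rightarrow> ('i \<Rightarrow> 'l \<Rightarrow> 'g) \<Rightarrow> 'l \<times> 'g \<times> 'i \<Rightarrow> 'l \<times> 'g \<times> 'i" where
  "rees_inv G P (lam, g, i) =
     (lam, inv\<^bsub>G\<^esub> (P i lam) \<otimes>\<^bsub>G\<^esub> inv\<^bsub>G\<^esub> g \<otimes>\<^bsub>G\<^esub> inv\<^bsub>G\<^esub> (P i lam), i)"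

datatype 'c lterm = Var | Const 'c | Mul "'c lterm" "'c lterm" | Inv "'c lterm"

fun lterm_consts :: "'c lterm \<Rightarrow> 'c set" where
  "lterm_consts Var = {}"
| "lterm_consts (Const c) = {c}"
| "lterm_consts (Mul a b) = lterm_consts a \<union> lterm_consts b"
| "lterm_consts (Inv a) = lterm_consts a"

fun lterm_eval ::
  "('g, 'm) monoid_scheme \<Rightarrow> ('i \<Rightarrow> 'l \<Rightarrow> 'g) \<Rightarrow> 'l \<times> 'g \<times> 'i
     \<Rightarrow> ('l \<times> 'g \<times> 'i) lterm \<Rightarrow> 'l \<times> 'g \<times> 'i" where
  "lterm_eval G P s Var = s"
| "lterm_eval G P s (Const c) = c"
| "lterm_eval G P s (Mul a b) = rees_mult G P (lterm_eval G P s a) (lterm_eval G P s b)"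
| "lterm_eval G P s (Inv a) = rees_inv G P (lterm_eval G P s a)"

datatype 'c sym = SymX | SymC 'c

fun lterm_word :: "'c lterm \<Rightarrow> 'c sym list" where
  "lterm_word Var = [SymX]"
| "lterm_word (Const c) = [SymC c]"
| "lterm_word (Mul a b) = lterm_word a @ lterm_word b"
| "lterm_word (Inv a) = lterm_word a"

end

theory Submission
  imports Defs
begin

lemma word_ne: "lterm_word t \<noteq> []"
  by (induction t) auto

lemma partA:
  assumes grp: "group G" and Pc: "\<And>i lam. P i lam \<in> carrier G"
    and col: "\<And>k. P k lam = P k mu"
  shows "lterm_consts t \<subseteq> rees_carrier G \<Longrightarrow>
    (hd (lterm_word t) \<noteq> SymX \<longrightarrow>
       lterm_eval G P (lam, \<one>\<^bsub>G\<^esub>, i1) t = lterm_eval G P (mu, \<one>\<^bsub>G\<^esub>, i1) t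
       \<and> lterm_eval G P (lam, \<one>\<^bsub>G\<^esub>, i1) t \<in> rees_carrier G) \<and>
    (hd (lterm_word t) = SymX \<longrightarrow>
       (\<exists>g k. g \<in> carrier G \<and>
          lterm_eval G P (lam, \<one>\<^bsub>G\<^esub>, i1) t = (lam, g, k) \<and>
          lterm_eval G P (mu, \<one>\<^bsub>G\<^esub>, i1) t = (mu, g, k)))"
proof (induction t)
  case Var
  then show ?case using group.is_monoid[OF grp] by (auto simp: monoid.one_closed)
next
  case (Const c)
  then show ?case by auto
next
  case (Mul a b)
  interpret group G by (rule grp)
  have ha: "hd (lterm_word (Mul a b)) = hd (lterm_word a)" using word_ne[of a] by simp
  from Mul have IA: "(hd (lterm_word a) \<noteq> SymX \<longrightarrow>
       lterm_eval G P (lam, \<one>\<^bsub>G\<^esub>, i1) a = lterm_eval G P (mu, \<one>\<^bsub>G\<^esub>, i1) a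
       \<and> lterm_eval G P (lam, \<one>\<^bsub>G\<^esub>, i1) a \<in> rees_carrier G) \<and>
    (hd (lterm_word a) = SymX \<longrightarrow>
       (\<exists>g k. g \<in> carrier G \<and>
          lterm_eval G P (lam, \<one>\<^bsub>G\<^esub>, i1) a = (lam, g, k) \<and>
          lterm_eval G P (mu, \<one>\<^bsub>G\<^esub>, i1) a = (mu, g, k)))" by auto
  from Mul have IB: "(hd (lterm_word b) \<noteq> SymX \<longrightarrow>
       lterm_eval G P (lam, \<one>\<^bsub>G\<^esub>, i1) b = lterm_eval G P (mu, \<one>\<^bsub>G\<^esub>, i1) b
       \<and> lterm_eval G P (lam, \<one>\<^bsub>G\<^esub>, i1) b \<in> rees_carrier G) \<and>
    (hd (lterm_word b) = SymX \<longrightarrow>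
       (\<exists>g k. g \<in> carrier G \<and>
          lterm_eval G P (lam, \<one>\<^bsub>G\<^esub>, i1) b = (lam, g, k) \<and>
          lterm_eval G P (mu, \<one>\<^bsub>G\<^esub>, i1) b = (mu, g, k)))" by auto
  have B: "\<exists>nu nu' h k. h \<in> carrier G \<and> lterm_eval G P (lam, \<one>\<^bsub>G\<^esub>, i1) b = (nu, h, k)
      \<and> lterm_eval G P (mu, \<one>\<^bsub>G\<^esub>, i1) b = (nu', h, k) \<and> (\<forall>x. P x nu = P x nu')"
  proof (cases "hd (lterm_word b) = SymX")
    case True
    then obtain g k where "g \<in> carrier G" "lterm_eval G P (lam, \<one>\<^bsub>G\<^esub>, i1) b = (lam, g, k)"
      "lterm_eval G P (mu, \<one>\<^bsub>G\<^esub>, i1) b = (mu, g, k)" using IB by blast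
    then show ?thesis using col by blast
  next
    case False
    then have e: "lterm_eval G P (lam, \<one>\<^bsub>G\<^esub>, i1) b = lterm_eval G P (mu, \<one>\<^bsub>G\<^esub>, i1) b"
      and m: "lterm_eval G P (lam, \<one>\<^bsub>G\<^esub>, i1) b \<in> rees_carrier G" using IB by blast+
    obtain r h k where "lterm_eval G P (lam, \<one>\<^bsub>G\<^esub>, i1) b = (r, h, k)" by (cases "lterm_eval G P (lam, \<one>\<^bsub>G\<^esub>, i1) b") blast
    then show ?thesis using e m unfolding rees_carrier_def by auto
  qed
  then obtain nu nu' h k where Bh: "h \<in> carrier G" "lterm_eval G P (lam, \<one>\<^bsub>G\<^esub>, i1) b = (nu, h, k)"
      "lterm_eval G P (mu, \<one>\<^bsub>G\<^esub>, i1) b = (nu', h, k)" "\<And>x. P x nu = P x nu'" by blast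
  show ?case
  proof (cases "hd (lterm_word a) = SymX")
    case True
    then obtain g k' where g: "g \<in> carrier G" and a1: "lterm_eval G P (lam, \<one>\<^bsub>G\<^esub>, i1) a = (lam, g, k')"
      and a2: "lterm_eval G P (mu, \<one>\<^bsub>G\<^esub>, i1) a = (mu, g, k')" using IA by blast
    have e1: "lterm_eval G P (lam, \<one>\<^bsub>G\<^esub>, i1) (Mul a b) = (lam, g \<otimes>\<^bsub>G\<^esub> P k' nu \<otimes>\<^bsub>G\<^esub> h, k)"
      using a1 Bh(2) by simp
    have e2: "lterm_eval G P (mu, \<one>\<^bsub>G\<^esub>, i1) (Mul a b) = (mu, g \<otimes>\<^bsub>G\<^esub> P k' nu \<otimes>\<^bsub>G\<^esub> h, k)"
      using a2 Bh(3) Bh(4)[of k'] by simp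
    have c: "g \<otimes>\<^bsub>G\<^esub> P k' nu \<otimes>\<^bsub>G\<^esub> h \<in> carrier G" using g Bh(1) Pc by simp
    show ?thesis unfolding e1 e2 using ha True c by auto
  next
    case False
    then have e: "lterm_eval G P (lam, \<one>\<^bsub>G\<^esub>, i1) a = lterm_eval G P (mu, \<one>\<^bsub>G\<^esub>, i1) a"
      and m: "lterm_eval G P (lam, \<one>\<^bsub>G\<^esub>, i1) a \<in> rees_carrier G" using IA by blast+
    obtain r g k' where a1: "lterm_eval G P (lam, \<one>\<^bsub>G\<^esub>, i1) a = (r, g, k')"
      by (cases "lterm_eval G P (lam, \<one>\<^bsub>G\<^esub>, i1) a") blast
    have g: "g \<in> carrier G" using m a1 unfolding rees_carrier_def by auto
    have e1: "lterm_eval G P (lam, \<one>\<^bsub>G\<^esub>, i1) (Mul a b) = (r, g \<otimes>\<^bsub>G\<^esub> P k' nu \<otimes>\<^bsub>G\<^esub> h, k)"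
      using a1 Bh(2) by simp
    have e2: "lterm_eval G P (mu, \<one>\<^bsub>G\<^esub>, i1) (Mul a b) = (r, g \<otimes>\<^bsub>G\<^esub> P k' nu \<otimes>\<^bsub>G\<^esub> h, k)"
      using a1 e Bh(3) Bh(4)[of k'] by simp
    have c: "g \<otimes>\<^bsub>G\<^esub> P k' nu \<otimes>\<^bsub>G\<^esub> h \<in> carrier G" using g Bh(1) Pc by simp
    show ?thesis using ha False e1 e2 c unfolding rees_carrier_def by auto
  qed
next
  case (Inv a)
  interpret group G by (rule grp)
  show ?case
  proof (cases "hd (lterm_word a) = SymX")
    case True
    then obtain g k' where "g \<in> carrier G" "lterm_eval G P (lam, \<one>\<^bsub>G\<^esub>, i1) a = (lam, g, k')"
      "lterm_eval G P (mu, \<one>\<^bsub>G\<^esub>, i1) a = (mu, g, k')" using Inv by auto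
    then show ?thesis using True Pc col by auto
  next
    case False
    then obtain r g k' where "g \<in> carrier G" "lterm_eval G P (lam, \<one>\<^bsub>G\<^esub>, i1) a = (r, g, k')"
      "lterm_eval G P (mu, \<one>\<^bsub>G\<^esub>, i1) a = (r, g, k')" using Inv
      by (cases "lterm_eval G P (lam, \<one>\<^bsub>G\<^esub>, i1) a") (auto simp: rees_carrier_def)
    then show ?thesis using False Pc by (auto simp: rees_carrier_def)
  qed
qed

lemma partB:
  assumes grp: "group G" and Pc: "\<And>i lam. P i lam \<in> carrier G"
    and row: "\<And>nu. P i nu = P j nu"
  shows "lterm_consts t \<subseteq> rees_carrier G \<Longrightarrow>
    (last (lterm_word t) \<noteq> SymX \<longrightarrow>
       lterm_eval G P (l1, \<one>\<^bsub>G\<^esub>, i) t = lterm_eval G P (l1, \<one>\<^bsub>G\<^esub>, j) t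
       \<and> lterm_eval G P (l1, \<one>\<^bsub>G\<^esub>, i) t \<in> rees_carrier G) \<and>
    (last (lterm_word t) = SymX \<longrightarrow>
       (\<exists>g nu. g \<in> carrier G \<and>
          lterm_eval G P (l1, \<one>\<^bsub>G\<^esub>, i) t = (nu, g, i) \<and>
          lterm_eval G P (l1, \<one>\<^bsub>G\<^esub>, j) t = (nu, g, j)))"
proof (induction t)
  case Var
  then show ?case using group.is_monoid[OF grp] by (auto simp: monoid.one_closed)
next
  case (Const c)
  then show ?case by auto
next
  case (Mul a b)
  interpret group G by (rule grp)
  have hb: "last (lterm_word (Mul a b)) = last (lterm_word b)" using word_ne[of b] by simp
  from Mul have IA: "(last (lterm_word a) \<noteq> SymX \<longrightarrow>
       lterm_eval G P (l1, \<one>\<^bsub>G\<^esub>, i) a = lterm_eval G P (l1, \<one>\<^bsub>G\<^esub>, j) a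
       \<and> lterm_eval G P (l1, \<one>\<^bsub>G\<^esub>, i) a \<in> rees_carrier G) \<and>
    (last (lterm_word a) = SymX \<longrightarrow>
       (\<exists>g nu. g \<in> carrier G \<and>
          lterm_eval G P (l1, \<one>\<^bsub>G\<^esub>, i) a = (nu, g, i) \<and>
          lterm_eval G P (l1, \<one>\<^bsub>G\<^esub>, j) a = (nu, g, j)))" by auto
  from Mul have IB: "(last (lterm_word b) \<noteq> SymX \<longrightarrow>
       lterm_eval G P (l1, \<one>\<^bsub>G\<^esub>, i) b = lterm_eval G P (l1, \<one>\<^bsub>G\<^esub>, j) b
       \<and> lterm_eval G P (l1, \<one>\<^bsub>G\<^esub>, i) b \<in> rees_carrier G) \<and>
    (last (lterm_word b) = SymX \<longrightarrow>
       (\<exists>g nu. g \<in> carrier G \<and>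
          lterm_eval G P (l1, \<one>\<^bsub>G\<^esub>, i) b = (nu, g, i) \<and>
          lterm_eval G P (l1, \<one>\<^bsub>G\<^esub>, j) b = (nu, g, j)))" by auto
  have A: "\<exists>r h k k'. h \<in> carrier G \<and> lterm_eval G P (l1, \<one>\<^bsub>G\<^esub>, i) a = (r, h, k)
      \<and> lterm_eval G P (l1, \<one>\<^bsub>G\<^esub>, j) a = (r, h, k') \<and> (\<forall>x. P k x = P k' x)"
  proof (cases "last (lterm_word a) = SymX")
    case True
    then obtain g nu where "g \<in> carrier G" "lterm_eval G P (l1, \<one>\<^bsub>G\<^esub>, i) a = (nu, g, i)"
      "lterm_eval G P (l1, \<one>\<^bsub>G\<^esub>, j) a = (nu, g, j)" using IA by blast
    then show ?thesis using row by blast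
  next
    case False
    then have e: "lterm_eval G P (l1, \<one>\<^bsub>G\<^esub>, i) a = lterm_eval G P (l1, \<one>\<^bsub>G\<^esub>, j) a"
      and m: "lterm_eval G P (l1, \<one>\<^bsub>G\<^esub>, i) a \<in> rees_carrier G" using IA by blast+
    obtain r h k where "lterm_eval G P (l1, \<one>\<^bsub>G\<^esub>, i) a = (r, h, k)" by (cases "lterm_eval G P (l1, \<one>\<^bsub>G\<^esub>, i) a") blast
    then show ?thesis using e m unfolding rees_carrier_def by auto
  qed
  then obtain r h k k' where Ah: "h \<in> carrier G" "lterm_eval G P (l1, \<one>\<^bsub>G\<^esub>, i) a = (r, h, k)"
      "lterm_eval G P (l1, \<one>\<^bsub>G\<^esub>, j) a = (r, h, k')" "\<And>x. P k x = P k' x" by blast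
  show ?case
  proof (cases "last (lterm_word b) = SymX")
    case True
    then obtain g nu where g: "g \<in> carrier G" and b1: "lterm_eval G P (l1, \<one>\<^bsub>G\<^esub>, i) b = (nu, g, i)"
      and b2: "lterm_eval G P (l1, \<one>\<^bsub>G\<^esub>, j) b = (nu, g, j)" using IB by blast
    have e1: "lterm_eval G P (l1, \<one>\<^bsub>G\<^esub>, i) (Mul a b) = (r, h \<otimes>\<^bsub>G\<^esub> P k nu \<otimes>\<^bsub>G\<^esub> g, i)"
      using b1 Ah(2) by simp
    have e2: "lterm_eval G P (l1, \<one>\<^bsub>G\<^esub>, j) (Mul a b) = (r, h \<otimes>\<^bsub>G\<^esub> P k nu \<otimes>\<^bsub>G\<^esub> g, j)"
      using b2 Ah(3) Ah(4)[of nu] by simp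
    have c: "h \<otimes>\<^bsub>G\<^esub> P k nu \<otimes>\<^bsub>G\<^esub> g \<in> carrier G" using g Ah(1) Pc by simp
    show ?thesis unfolding e1 e2 using hb True c by auto
  next
    case False
    then have e: "lterm_eval G P (l1, \<one>\<^bsub>G\<^esub>, i) b = lterm_eval G P (l1, \<one>\<^bsub>G\<^esub>, j) b"
      and m: "lterm_eval G P (l1, \<one>\<^bsub>G\<^esub>, i) b \<in> rees_carrier G" using IB by blast+
    obtain nu g k2 where b1: "lterm_eval G P (l1, \<one>\<^bsub>G\<^esub>, i) b = (nu, g, k2)"
      by (cases "lterm_eval G P (l1, \<one>\<^bsub>G\<^esub>, i) b") blast
    have g: "g \<in> carrier G" using m b1 unfolding rees_carrier_def by auto
    have e1: "lterm_eval G P (l1, \<one>\<^bsub>G\<^esub>, i) (Mul a b) = (r, h \<otimes>\<^bsub>G\<^esub> P k nu \<otimes>\<^bsub>G\<^esub> g, k2)"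
      using b1 Ah(2) by simp
    have e2: "lterm_eval G P (l1, \<one>\<^bsub>G\<^esub>, j) (Mul a b) = (r, h \<otimes>\<^bsub>G\<^esub> P k nu \<otimes>\<^bsub>G\<^esub> g, k2)"
      using b1 e Ah(3) Ah(4)[of nu] by simp
    have c: "h \<otimes>\<^bsub>G\<^esub> P k nu \<otimes>\<^bsub>G\<^esub> g \<in> carrier G" using g Ah(1) Pc by simp
    show ?thesis using hb False e1 e2 c unfolding rees_carrier_def by auto
  qed
next
  case (Inv a)
  interpret group G by (rule grp)
  show ?case
  proof (cases "last (lterm_word a) = SymX")
    case True
    then obtain g nu where "g \<in> carrier G" "lterm_eval G P (l1, \<one>\<^bsub>G\<^esub>, i) a = (nu, g, i)"
      "lterm_eval G P (l1, \<one>\<^bsub>G\<^esub>, j) a = (nu, g, j)" using Inv by auto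
    then show ?thesis using True Pc row by auto
  next
    case False
    then obtain r g k' where "g \<in> carrier G" "lterm_eval G P (l1, \<one>\<^bsub>G\<^esub>, i) a = (r, g, k')"
      "lterm_eval G P (l1, \<one>\<^bsub>G\<^esub>, j) a = (r, g, k')" using Inv
      by (cases "lterm_eval G P (l1, \<one>\<^bsub>G\<^esub>, i) a") (auto simp: rees_carrier_def)
    then show ?thesis using False Pc by (auto simp: rees_carrier_def)
  qed
qed

theorem mainTheorem1:
  fixes G :: "('g, 'm) monoid_scheme" and P :: "'i \<Rightarrow> 'l \<Rightarrow> 'g"
    and l1 :: 'l and i1 :: 'i
  assumes "rees_normalised G P l1 i1"
  shows "(\<forall>lam mu. (\<forall>k. P k lam = P k mu) \<longrightarrow>
            (\<forall>t :: ('l \<times> 'g \<times> 'i) lterm. lterm_consts t \<subseteq> rees_carrier G \<longrightarrow>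
               (hd (lterm_word t) \<noteq> SymX \<longrightarrow>
                  lterm_eval G P (lam, \<one>\<^bsub>G\<^esub>, i1) t = lterm_eval G P (mu, \<one>\<^bsub>G\<^esub>, i1) t) \<and>
               (hd (lterm_word t) = SymX \<longrightarrow>
                  (\<exists>g k. g \<in> carrier G \<and>
                     lterm_eval G P (lam, \<one>\<^bsub>G\<^esub>, i1) t = (lam, g, k) \<and>
                     lterm_eval G P (mu, \<one>\<^bsub>G\<^esub>, i1) t = (mu, g, k)))))
       \<and> (\<forall>i j. (\<forall>nu. P i nu = P j nu) \<longrightarrow>
            (\<forall>t :: ('l \<times> 'g \<times> 'i) lterm. lterm_consts t \<subseteq> rees_carrier G \<longrightarrow>
               (last (lterm_word t) \<noteq> SymX \<longrightarrow>
                  lterm_eval G P (l1, \<one>\<^bsub>G\<^esub>, i) t = lterm_eval G P (l1, \<one>\<^bsub>G\<^esub>, j) t) \<and>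
               (last (lterm_word t) = SymX \<longrightarrow>
                  (\<exists>g nu. g \<in> carrier G \<and>
                     lterm_eval G P (l1, \<one>\<^bsub>G\<^esub>, i) t = (nu, g, i) \<and>
                     lterm_eval G P (l1, \<one>\<^bsub>G\<^esub>, j) t = (nu, g, j)))))"
proof -
  have grp: "group G" and Pc: "\<And>i lam. P i lam \<in> carrier G"
    using assms by (auto simp: rees_normalised_def)
  show ?thesis
  proof (intro conjI allI impI)
    fix lam mu :: 'l and t :: "('l \<times> 'g \<times> 'i) lterm" assume c: "\<forall>k. P k lam = P k mu" and t: "lterm_consts t \<subseteq> rees_carrier G"
    have R: "(hd (lterm_word t) \<noteq> SymX \<longrightarrow>
       lterm_eval G P (lam, \<one>\<^bsub>G\<^esub>, i1) t = lterm_eval G P (mu, \<one>\<^bsub>G\<^esub>, i1) t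
       \<and> lterm_eval G P (lam, \<one>\<^bsub>G\<^esub>, i1) t \<in> rees_carrier G) \<and>
    (hd (lterm_word t) = SymX \<longrightarrow>
       (\<exists>g k. g \<in> carrier G \<and>
          lterm_eval G P (lam, \<one>\<^bsub>G\<^esub>, i1) t = (lam, g, k) \<and>
          lterm_eval G P (mu, \<one>\<^bsub>G\<^esub>, i1) t = (mu, g, k)))"
      by (rule partA[OF grp]) (use Pc c t in auto)
    { assume "hd (lterm_word t) \<noteq> SymX"
      then show "lterm_eval G P (lam, \<one>\<^bsub>G\<^esub>, i1) t = lterm_eval G P (mu, \<one>\<^bsub>G\<^esub>, i1) t" using R by blast }
    { assume "hd (lterm_word t) = SymX"
      then show "\<exists>g k. g \<in> carrier G \<and>
                     lterm_eval G P (lam, \<one>\<^bsub>G\<^esub>, i1) t = (lam, g, k) \<and>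
                     lterm_eval G P (mu, \<one>\<^bsub>G\<^esub>, i1) t = (mu, g, k)" using R by blast }
  next
    fix i j :: 'i and t :: "('l \<times> 'g \<times> 'i) lterm" assume c: "\<forall>nu. P i nu = P j nu" and t: "lterm_consts t \<subseteq> rees_carrier G"
    have R: "(last (lterm_word t) \<noteq> SymX \<longrightarrow>
       lterm_eval G P (l1, \<one>\<^bsub>G\<^esub>, i) t = lterm_eval G P (l1, \<one>\<^bsub>G\<^esub>, j) t
       \<and> lterm_eval G P (l1, \<one>\<^bsub>G\<^esub>, i) t \<in> rees_carrier G) \<and>
    (last (lterm_word t) = SymX \<longrightarrow>
       (\<exists>g nu. g \<in> carrier G \<and>
          lterm_eval G P (l1, \<one>\<^bsub>G\<^esub>, i) t = (nu, g, i) \<and>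
          lterm_eval G P (l1, \<one>\<^bsub>G\<^esub>, j) t = (nu, g, j)))"
      by (rule partB[OF grp]) (use Pc c t in auto)
    { assume "last (lterm_word t) \<noteq> SymX"
      then show "lterm_eval G P (l1, \<one>\<^bsub>G\<^esub>, i) t = lterm_eval G P (l1, \<one>\<^bsub>G\<^esub>, j) t" using R by blast }
    { assume "last (lterm_word t) = SymX"
      then show "\<exists>g nu. g \<in> carrier G \<and>
                     lterm_eval G P (l1, \<one>\<^bsub>G\<^esub>, i) t = (nu, g, i) \<and>
                     lterm_eval G P (l1, \<one>\<^bsub>G\<^esub>, j) t = (nu, g, j)" using R by blast }
  qed
qed

end
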